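(* Let $(G,\omega)$ be a weighted graph of genus $g=g(G,\omega)$. Then: (1) for every $D\in\operatorname{Div}(G,\omega)$, $r_{(G,\omega)}(D)-r_{(G,\omega)}(K_{(G,\omega)}-D)=\deg D-g+1$; (2) for every $D,D'\in\operatorname{Div}(G)$ with $D\sim D'$ (linear equivalence on $G$), $r_{(G,\omega)}(D)=r_{(G,\omega)}(D')$.
   Context: Graphs are finite and connected, loops and multiple edges allowed. $\operatorname{Div}(G)$ is the free abelian group on $V(G)$. Define $(v\cdot w)$ as the number of edges joining $v,w$ if $v\ne w$, and $(v\cdot v)=-\operatorname{val}(v)+2\operatorname{loop}(v)$ (valency with loops counted twice). $T_v=\sum_w(v\cdot w)w$, $\operatorname{Prin}(G)$ is generated by the $T_v$, $D\sim D'$ iff $D-D'\in\operatorname{Prin}(G)$. The rank $r_G(D)$ is $-1$ if no effective divisor is equivalent to $D$, and otherwise the maximum $k\ge0$ such that for every effective $E$ of degree $k$ some effective divisor is equivalent to $D-E$. For a graph $H$ with loops, $\widehat H$ is obtained by inserting one new vertex in each loop-edge, and $r^{\#}_H(D):=r_{\widehat H}(D)$ (divisor extended by zero). A weighted graph is a pair $(G,\omega)$ with $\omega:V(G)\to\mathbb{Z}_{\ge0}$; its genus is $g(G,\omega)=b_1(G)+\sum_v\omega(v)$, where $b_1(G)=|E|-|V|+1$. The virtual graph $G^\omega$ is obtained from $G$ by attaching $\omega(v)$ new loops at each vertex $v$; $V(G^\omega)=V(G)$ and $\operatorname{Div}(G,\omega):=\operatorname{Div}(G^\omega)=\operatorname{Div}(G)$.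 Set $K_{(G,\omega)}=\sum_{v}(\operatorname{val}_{G^\omega}(v)-2)v$ and $r_{(G,\omega)}(D):=r^{\#}_{G^\omega}(D)$. *)

theory Defs
  imports Main
begin

text \<open>A finite connected multigraph (loops and multiple edges allowed) is given by a
vertex set V and a symmetric edge-multiplicity function m; m v v is the number of
loops at v.\<close>

definition multigraph :: "'a set \<Rightarrow> ('a \<Rightarrow> 'a \<Rightarrow> nat) \<Rightarrow> bool" where
  "multigraph V m \<longleftrightarrow> finite V \<and> V \<noteq> {} \<and> (\<forall>v w. m v w = m w v)
     \<and> (\<forall>v w. 0 < m v w \<longrightarrow> v \<in> V \<and> w \<in> V)
     \<and> (\<forall>v\<in>V. \<forall>w\<in>V. (v, w) \<in> {(x, y). 0 < m x y}\<^sup>*)"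

definition num_edges :: "'a set \<Rightarrow> ('a \<Rightarrow> 'a \<Rightarrow> nat) \<Rightarrow> nat" where
  "num_edges V m = (\<Sum>v\<in>V. m v v) + (\<Sum>v\<in>V. \<Sum>w\<in>V - {v}. m v w) div 2"

definition betti1 :: "'a set \<Rightarrow> ('a \<Rightarrow> 'a \<Rightarrow> nat) \<Rightarrow> int" where
  "betti1 V m = int (num_edges V m) - int (card V) + 1"

definition valency :: "'a set \<Rightarrow> ('a \<Rightarrow> 'a \<Rightarrow> nat) \<Rightarrow> 'a \<Rightarrow> nat" where
  "valency V m v = (\<Sum>w\<in>V - {v}. m v w) + 2 * m v v"

definition inters :: "'a set \<Rightarrow> ('a \<Rightarrow> 'a \<Rightarrow> nat) \<Rightarrow> 'a \<Rightarrow> 'a \<Rightarrow> int" where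
  "inters V m v w = (if v \<noteq> w then int (m v w) else - int (valency V m v) + 2 * int (m v v))"

definition T_div :: "'a set \<Rightarrow> ('a \<Rightarrow> 'a \<Rightarrow> nat) \<Rightarrow> 'a \<Rightarrow> 'a \<Rightarrow> int" where
  "T_div V m v = (\<lambda>w. if w \<in> V then inters V m v w else 0)"

definition is_div :: "'a set \<Rightarrow> ('a \<Rightarrow> int) \<Rightarrow> bool" where
  "is_div V D \<longleftrightarrow> (\<forall>x. x \<notin> V \<longrightarrow> D x = 0)"

definition principal :: "'a set \<Rightarrow> ('a \<Rightarrow> 'a \<Rightarrow> nat) \<Rightarrow> ('a \<Rightarrow> int) \<Rightarrow> bool" where
  "principal V m D \<longleftrightarrow> (\<exists>c :: 'a \<Rightarrow> int. D = (\<lambda>w. \<Sum>v\<in>V. c v * T_div V m v w))"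

definition lin_equiv :: "'a set \<Rightarrow> ('a \<Rightarrow> 'a \<Rightarrow> nat) \<Rightarrow> ('a \<Rightarrow> int) \<Rightarrow> ('a \<Rightarrow> int) \<Rightarrow> bool" where
  "lin_equiv V m D D' \<longleftrightarrow> principal V m (\<lambda>x. D x - D' x)"

definition deg :: "'a set \<Rightarrow> ('a \<Rightarrow> int) \<Rightarrow> int" where
  "deg V D = (\<Sum>v\<in>V. D v)"

definition effective :: "'a set \<Rightarrow> ('a \<Rightarrow> int) \<Rightarrow> bool" where
  "effective V D \<longleftrightarrow> is_div V D \<and> (\<forall>v. 0 \<le> D v)"

definition rank :: "'a set \<Rightarrow> ('a \<Rightarrow> 'a \<Rightarrow> nat) \<Rightarrow> ('a \<Rightarrow> int) \<Rightarrow> int" where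
  "rank V m D =
    (if \<not> (\<exists>E. effective V E \<and> lin_equiv V m D E) then -1
     else int (GREATEST k::nat. \<forall>E. effective V E \<and> deg V E = int k \<longrightarrow>
                 (\<exists>F. effective V F \<and> lin_equiv V m (\<lambda>x. D x - E x) F)))"

text \<open>The graph \<open>\<widehat>H\<close>: one new vertex Inr (v,i) inserted into the i-th loop at v;
the subdivided loop becomes two parallel edges between Inl v and Inr (v,i).\<close>
definition hat_V :: "'a set \<Rightarrow> ('a \<Rightarrow> 'a \<Rightarrow> nat) \<Rightarrow> ('a + ('a \<times> nat)) set" where
  "hat_V V m = Inl ` V \<union> {Inr (v, i) | v i. v \<in> V \<and> i < m v v}"

definition hat_m :: "('a \<Rightarrow> 'a \<Rightarrow> nat) \<Rightarrow> ('a + ('a \<times> nat)) \<Rightarrow> ('a + ('a \<times> nat)) \<Rightarrow> nat" where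
  "hat_m m x y = (case (x, y) of
      (Inl v, Inl w) \<Rightarrow> (if v = w then 0 else m v w)
    | (Inl v, Inr (w, i)) \<Rightarrow> (if v = w \<and> i < m v v then 2 else 0)
    | (Inr (w, i), Inl v) \<Rightarrow> (if v = w \<and> i < m v v then 2 else 0)
    | (Inr _, Inr _) \<Rightarrow> 0)"

definition ext_div :: "('a \<Rightarrow> int) \<Rightarrow> ('a + ('a \<times> nat)) \<Rightarrow> int" where
  "ext_div D = (\<lambda>x. case x of Inl v \<Rightarrow> D v | Inr _ \<Rightarrow> 0)"

definition rank_sharp :: "'a set \<Rightarrow> ('a \<Rightarrow> 'a \<Rightarrow> nat) \<Rightarrow> ('a \<Rightarrow> int) \<Rightarrow> int" where
  "rank_sharp V m D = rank (hat_V V m) (hat_m m) (ext_div D)"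

definition virt_m :: "'a set \<Rightarrow> ('a \<Rightarrow> 'a \<Rightarrow> nat) \<Rightarrow> ('a \<Rightarrow> nat) \<Rightarrow> 'a \<Rightarrow> 'a \<Rightarrow> nat" where
  "virt_m V m \<omega> = (\<lambda>v w. m v w + (if v = w \<and> v \<in> V then \<omega> v else 0))"

definition wgenus :: "'a set \<Rightarrow> ('a \<Rightarrow> 'a \<Rightarrow> nat) \<Rightarrow> ('a \<Rightarrow> nat) \<Rightarrow> int" where
  "wgenus V m \<omega> = betti1 V m + (\<Sum>v\<in>V. int (\<omega> v))"

definition wcanon :: "'a set \<Rightarrow> ('a \<Rightarrow> 'a \<Rightarrow> nat) \<Rightarrow> ('a \<Rightarrow> nat) \<Rightarrow> 'a \<Rightarrow> int" where
  "wcanon V m \<omega> = (\<lambda>v. if v \<in> V then int (valency V (virt_m V m \<omega>) v) - 2 else 0)"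

definition wrank :: "'a set \<Rightarrow> ('a \<Rightarrow> 'a \<Rightarrow> nat) \<Rightarrow> ('a \<Rightarrow> nat) \<Rightarrow> ('a \<Rightarrow> int) \<Rightarrow> int" where
  "wrank V m \<omega> D = rank_sharp V (virt_m V m \<omega>) D"

end

theory Submission
  imports Defs
begin

lemma sum_swap_sym:
  fixes f :: "'b \<Rightarrow> 'b \<Rightarrow> int"
  assumes "finite S" and sym: "\<And>v w. f v w = f w v"
  shows "(\<Sum>v\<in>S. \<Sum>w\<in>{w\<in>S. \<pi> w < \<pi> v}. f v w) = (\<Sum>v\<in>S. \<Sum>w\<in>{w\<in>S. \<pi> v < \<pi> w}. f v w)"
proof -
  have "(\<Sum>v\<in>S. \<Sum>w\<in>{w\<in>S. \<pi> w < \<pi> v}. f v w) = (\<Sum>w\<in>S. \<Sum>v\<in>{v\<in>S. \<pi> w < \<pi> v}. f v w)"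
    using sum.swap_restrict[OF assms(1) assms(1), of "\<lambda>v w. f v w" "\<lambda>v w. \<pi> w < \<pi> v"] by simp
  also have "\<dots> = (\<Sum>v\<in>S. \<Sum>w\<in>{w\<in>S. \<pi> v < \<pi> w}. f v w)"
    using sym by simp
  finally show ?thesis .
qed

lemma sum_split_sym:
  fixes f :: "'b \<Rightarrow> 'b \<Rightarrow> int"
  and \<pi> :: "'b \<Rightarrow> int"
  assumes "finite S" and sym: "\<And>v w. f v w = f w v" and inj: "inj_on \<pi> S"
  shows "(\<Sum>v\<in>S. \<Sum>w\<in>S-{v}. f v w) = 2 * (\<Sum>v\<in>S. \<Sum>w\<in>{w\<in>S. \<pi> w < \<pi> v}. f v w)"
proof -
  have "\<And>v. v \<in> S \<Longrightarrow> (\<Sum>w\<in>S-{v}. f v w) = (\<Sum>w\<in>{w\<in>S. \<pi> w < \<pi> v}. f v w) + (\<Sum>w\<in>{w\<in>S. \<pi> v < \<pi> w}. f v w)"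
  proof -
    fix v assume v: "v \<in> S"
    have eq: "S - {v} = {w\<in>S. \<pi> w < \<pi> v} \<union> {w\<in>S. \<pi> v < \<pi> w}"
      using inj v by (auto simp: inj_on_def; metis linorder_neqE)
    show "(\<Sum>w\<in>S-{v}. f v w) = (\<Sum>w\<in>{w\<in>S. \<pi> w < \<pi> v}. f v w) + (\<Sum>w\<in>{w\<in>S. \<pi> v < \<pi> w}. f v w)"
      unfolding eq by (rule sum.union_disjoint) (use assms(1) in auto)
  qed
  then have "(\<Sum>v\<in>S. \<Sum>w\<in>S-{v}. f v w) = (\<Sum>v\<in>S. \<Sum>w\<in>{w\<in>S. \<pi> w < \<pi> v}. f v w) + (\<Sum>v\<in>S. \<Sum>w\<in>{w\<in>S. \<pi> v < \<pi> w}. f v w)"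
    by (simp add: sum.distrib)
  then show ?thesis using sum_swap_sym[OF assms(1) sym, of _ \<pi>] by simp
qed

lemma exists_inj_int:
  assumes "finite S" shows "\<exists>\<pi>::'b \<Rightarrow> int. inj_on \<pi> S"
proof -
  obtain f :: "'b \<Rightarrow> nat" and n where "f ` S = {i. i < n}" "inj_on f S"
    using finite_imp_inj_to_nat_seg[OF assms] by blast
  then have "inj_on (\<lambda>x. int (f x)) S" by (auto simp: inj_on_def)
  then show ?thesis by blast
qed

lemma finite_bounded_funs:
  assumes "finite A" "finite B"
  shows "finite {f::'b \<Rightarrow> int. (\<forall>x. x \<notin> A \<longrightarrow> f x = 0) \<and> (\<forall>x\<in>A. f x \<in> B)}"
proof -
  have "{f::'b \<Rightarrow> int. (\<forall>x. x \<notin> A \<longrightarrow> f x = 0) \<and> (\<forall>x\<in>A. f x \<in> B)}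
       = {f. \<forall>x. (x \<in> A \<longrightarrow> f x \<in> B) \<and> (x \<notin> A \<longrightarrow> f x = 0)}" by auto
  then show ?thesis using finite_set_of_finite_funs[OF assms, of 0] by simp
qed

locale lg =
  fixes W :: "'b set" and mm :: "'b \<Rightarrow> 'b \<Rightarrow> nat"
  assumes mg: "multigraph W mm" and noloop: "\<And>v. mm v v = 0"
begin

lemma finW: "finite W" using mg by (simp add: multigraph_def)
lemma neW: "W \<noteq> {}" using mg by (simp add: multigraph_def)
lemma symm: "mm v w = mm w v" using mg by (simp add: multigraph_def)
lemma supp: "0 < mm v w \<Longrightarrow> v \<in> W \<and> w \<in> W" using mg unfolding multigraph_def by blast

lemma conn:
  assumes "A \<subseteq> W" "A \<noteq> {}" "A \<noteq> W"
  shows "\<exists>a\<in>A. \<exists>b\<in>W-A. 0 < mm a b"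
proof -
  obtain a where a: "a \<in> A" using assms by blast
  obtain b where b: "b \<in> W" "b \<notin> A" using assms by blast
  have "(a, b) \<in> {(x, y). 0 < mm x y}\<^sup>*" using mg a b assms(1) by (auto simp: multigraph_def)
  then show ?thesis using b(2)
  proof (induction rule: rtrancl_induct)
    case base then show ?case using a by simp
  next
    case (step y z)
    show ?case
    proof (cases "y \<in> A")
      case True then show ?thesis using step supp by blast
    next
      case False then show ?thesis using step.IH by blast
    qed
  qed
qed

definition Pc :: "('b \<Rightarrow> int) \<Rightarrow> 'b \<Rightarrow> int" where
  "Pc c = (\<lambda>w. \<Sum>v\<in>W. c v * T_div W mm v w)"

lemma val_eq: "valency W mm v = (\<Sum>w\<in>W-{v}. mm v w)"
  by (simp add: valency_def noloop)

lemma Pc_out: "w \<notin> W \<Longrightarrow> Pc c w = 0"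
  by (simp add: Pc_def T_div_def)

lemma Pc_eval: assumes "w \<in> W" shows "Pc c w = (\<Sum>v\<in>W. int (mm v w) * (c v - c w))"
proof -
  have "Pc c w = c w * inters W mm w w + (\<Sum>v\<in>W-{w}. c v * inters W mm v w)"
    unfolding Pc_def T_div_def using assms finW by (simp add: sum.remove)
  also have "\<dots> = - c w * (\<Sum>v\<in>W-{w}. int (mm v w)) + (\<Sum>v\<in>W-{w}. c v * int (mm v w))"
    by (simp add: inters_def val_eq noloop symm[of w])
  also have "\<dots> = (\<Sum>v\<in>W-{w}. int (mm v w) * (c v - c w))"
    by (simp add: sum_distrib_left sum_subtractf algebra_simps sum_negf)
  also have "\<dots> = (\<Sum>v\<in>W. int (mm v w) * (c v - c w))"
    using assms finW by (simp add: sum.remove)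
  finally show ?thesis .
qed

lemma Pc_cong: "(\<And>x. x \<in> W \<Longrightarrow> c x = c' x) \<Longrightarrow> Pc c = Pc c'"
  unfolding Pc_def by (intro ext sum.cong) auto

lemma Pc_add: "Pc (\<lambda>x. a x + b x) w = Pc a w + Pc b w"
  unfolding Pc_def by (simp add: sum.distrib algebra_simps)

lemma Pc_diff: "Pc (\<lambda>x. a x - b x) w = Pc a w - Pc b w"
  unfolding Pc_def by (simp add: sum_subtractf algebra_simps)

lemma Pc_neg: "Pc (\<lambda>x. - a x) w = - Pc a w"
  unfolding Pc_def by (simp add: sum_negf)

lemma Pc_const: "Pc (\<lambda>x. k) w = 0"
  by (cases "w \<in> W") (simp_all add: Pc_eval Pc_out)

lemma Pc_zero: "Pc (\<lambda>x. 0) w = 0" using Pc_const[of 0] .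

lemma principal_iff: "principal W mm D \<longleftrightarrow> (\<exists>c. D = Pc c)"
  by (simp add: principal_def Pc_def)

lemma le_iff: "lin_equiv W mm D D' \<longleftrightarrow> (\<exists>c. \<forall>x. D x - D' x = Pc c x)"
  unfolding lin_equiv_def principal_iff by (auto simp: fun_eq_iff)

lemma le_refl: "lin_equiv W mm D D"
  unfolding le_iff by (rule exI[of _ "\<lambda>_. 0"]) (simp add: Pc_zero)

lemma le_sym: "lin_equiv W mm D D' \<Longrightarrow> lin_equiv W mm D' D"
  unfolding le_iff
proof (elim exE)
  fix c assume "\<forall>x. D x - D' x = Pc c x"
  then have "\<forall>x. D' x - D x = Pc (\<lambda>x. - c x) x" by (metis Pc_neg minus_diff_eq)
  then show "\<exists>c. \<forall>x. D' x - D x = Pc c x" by blast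
qed

lemma le_trans: "lin_equiv W mm D D' \<Longrightarrow> lin_equiv W mm D' D'' \<Longrightarrow> lin_equiv W mm D D''"
  unfolding le_iff
proof (elim exE)
  fix c c' assume "\<forall>x. D x - D' x = Pc c x" "\<forall>x. D' x - D'' x = Pc c' x"
  then have "\<forall>x. D x - D'' x = Pc (\<lambda>x. c x + c' x) x" by (simp add: Pc_add) (metis diff_add_cancel add_diff_eq)
  then show "\<exists>c. \<forall>x. D x - D'' x = Pc c x" by blast
qed

lemma le_sub: "lin_equiv W mm D D' \<Longrightarrow> lin_equiv W mm (\<lambda>x. D x - E x) (\<lambda>x. D' x - E x)"
  unfolding le_iff by simp

lemma deg_Pc: "deg W (Pc c) = 0"
proof -
  have "deg W (Pc c) = (\<Sum>w\<in>W. \<Sum>v\<in>W. int (mm v w) * c v) - (\<Sum>w\<in>W. \<Sum>v\<in>W. int (mm v w) * c w)"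
    unfolding deg_def by (simp add: Pc_eval algebra_simps sum_subtractf)
  also have "(\<Sum>w\<in>W. \<Sum>v\<in>W. int (mm v w) * c v) = (\<Sum>v\<in>W. \<Sum>w\<in>W. int (mm v w) * c v)"
    by (rule sum.swap)
  also have "\<dots> = (\<Sum>w\<in>W. \<Sum>v\<in>W. int (mm v w) * c w)"
    by (simp add: symm)
  finally show ?thesis by simp
qed

lemma deg_diff: "deg W (\<lambda>x. D x - E x) = deg W D - deg W E"
  by (simp add: deg_def sum_subtractf)

lemma deg_add: "deg W (\<lambda>x. D x + E x) = deg W D + deg W E"
  by (simp add: deg_def sum.distrib)

lemma le_deg: "lin_equiv W mm D D' \<Longrightarrow> deg W D = deg W D'"
proof -
  assume "lin_equiv W mm D D'"
  then obtain c where c: "\<forall>x. D x - D' x = Pc c x" by (auto simp: le_iff)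
  have "deg W (\<lambda>x. D x - D' x) = 0" using c deg_Pc[of c] by (simp add: fun_eq_iff)
  then show ?thesis by (simp add: deg_diff)
qed

lemma le_div: "lin_equiv W mm D D' \<Longrightarrow> is_div W D \<Longrightarrow> is_div W D'"
  unfolding le_iff is_div_def using Pc_out by (metis diff_0 neg_equal_0_iff_equal)

definition nu :: "('b \<Rightarrow> int) \<Rightarrow> 'b \<Rightarrow> int" where
  "nu \<pi> v = (if v \<in> W then (\<Sum>w\<in>{w\<in>W. \<pi> w < \<pi> v}. int (mm v w)) - 1 else 0)"

definition KK :: "'b \<Rightarrow> int" where
  "KK v = (if v \<in> W then int (valency W mm v) - 2 else 0)"

lemma nu_div: "is_div W (nu \<pi>)" by (simp add: is_div_def nu_def)
lemma KK_div: "is_div W KK" by (simp add: is_div_def KK_def)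

lemma nu_rev: assumes "inj_on \<pi> W" shows "KK x - nu \<pi> x = nu (\<lambda>x. - \<pi> x) x"
proof (cases "x \<in> W")
  case True
  have eq: "W - {x} = {w\<in>W. \<pi> w < \<pi> x} \<union> {w\<in>W. \<pi> x < \<pi> w}"
    using assms True by (auto simp: inj_on_def; metis linorder_neqE)
  have "(\<Sum>w\<in>W-{x}. int (mm x w)) = (\<Sum>w\<in>{w\<in>W. \<pi> w < \<pi> x}. int (mm x w)) + (\<Sum>w\<in>{w\<in>W. \<pi> x < \<pi> w}. int (mm x w))"
    unfolding eq by (rule sum.union_disjoint) (use finW in auto)
  then show ?thesis using True by (simp add: KK_def nu_def val_eq)
qed (simp add: KK_def nu_def)

lemma deg_nu: assumes "inj_on \<pi> W" shows "2 * deg W (nu \<pi>) = deg W KK"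
proof -
  have s: "(\<Sum>v\<in>W. \<Sum>w\<in>{w\<in>W. \<pi> w < \<pi> v}. int (mm v w)) = (\<Sum>v\<in>W. \<Sum>w\<in>{w\<in>W. \<pi> v < \<pi> w}. int (mm v w))"
    by (rule sum_swap_sym[OF finW]) (simp add: symm)
  have "deg W (nu \<pi>) = deg W (nu (\<lambda>x. - \<pi> x))"
    unfolding deg_def nu_def using s by (simp add: sum_subtractf)
  moreover have "KK = (\<lambda>x. nu \<pi> x + nu (\<lambda>x. - \<pi> x) x)"
    by (rule ext) (metis nu_rev[OF assms] diff_eq_eq add.commute)
  then have "deg W KK = deg W (nu \<pi>) + deg W (nu (\<lambda>x. - \<pi> x))"
    using deg_add by simp
  ultimately show ?thesis by simp
qed

lemma kernel:
  assumes "\<forall>w\<in>W. Pc c w = 0" "v \<in> W" "w \<in> W" shows "c v = c w"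
proof -
  define mn where "mn = Min (c ` W)"
  define A where "A = {v\<in>W. c v = mn}"
  have mn: "\<And>x. x \<in> W \<Longrightarrow> mn \<le> c x" unfolding mn_def using finW by simp
  have "mn \<in> c ` W" unfolding mn_def using finW neW by simp
  then have Ane: "A \<noteq> {}" unfolding A_def by auto
  have "A = W"
  proof (rule ccontr)
    assume "A \<noteq> W"
    then obtain a b where ab: "a \<in> A" "b \<in> W - A" "0 < mm a b" using conn[of A] Ane A_def by blast
    have aW: "a \<in> W" and ca: "c a = mn" using ab by (auto simp: A_def)
    have cb: "c a < c b" using ab mn[of b] ca by (auto simp: A_def)
    have "0 < (\<Sum>v\<in>W. int (mm v a) * (c v - c a))"
    proof (rule sum_pos2[OF finW, of b])
      show "b \<in> W" using ab by auto
      show "0 < int (mm b a) * (c b - c a)" using ab(3) cb by (simp add: symm[of b a])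
      fix i assume "i \<in> W" then show "0 \<le> int (mm i a) * (c i - c a)" using mn[of i] ca by simp
    qed
    then have "0 < Pc c a" using aW by (simp add: Pc_eval)
    then show False using assms(1) ab by (auto simp: A_def)
  qed
  then have "c v = mn" "c w = mn" using assms(2,3) unfolding A_def by blast+
  then show ?thesis by simp
qed

lemma nu_not_eff:
  assumes inj: "inj_on \<pi> W" and E: "effective W E" and le: "lin_equiv W mm (nu \<pi>) E"
  shows False
proof -
  obtain c where c: "\<forall>x. nu \<pi> x - E x = Pc c x" using le by (auto simp: le_iff)
  define mn where "mn = Min (c ` W)"
  define A where "A = {v\<in>W. c v = mn}"
  have mn: "\<And>x. x \<in> W \<Longrightarrow> mn \<le> c x" unfolding mn_def using finW by simp
  have "mn \<in> c ` W" unfolding mn_def using finW neW by simp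
  then have Ane: "A \<noteq> {}" unfolding A_def by auto
  have finA: "finite A" using finW by (simp add: A_def)
  define p where "p = Min (\<pi> ` A)"
  have "p \<in> \<pi> ` A" unfolding p_def using finA Ane by simp
  then obtain w where w: "w \<in> A" "\<pi> w = p" by auto
  have pmin: "\<And>x. x \<in> A \<Longrightarrow> \<pi> w \<le> \<pi> x" using w finA by (simp add: p_def)
  have wW: "w \<in> W" and cw: "c w = mn" using w by (auto simp: A_def)
  have "(\<Sum>v\<in>{v\<in>W. \<pi> v < \<pi> w}. int (mm w v)) \<le> (\<Sum>v\<in>{v\<in>W. \<pi> v < \<pi> w}. int (mm v w) * (c v - c w))"
  proof (rule sum_mono)
    fix v assume v: "v \<in> {v\<in>W. \<pi> v < \<pi> w}"
    then have "v \<notin> A" using pmin by force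
    then have "c v - c w \<ge> 1" using v mn[of v] cw by (auto simp: A_def)
    then show "int (mm w v) \<le> int (mm v w) * (c v - c w)"
      by (simp add: symm[of w v]) (metis mult.right_neutral mult_left_mono of_nat_0_le_iff)
  qed
  also have "\<dots> \<le> (\<Sum>v\<in>W. int (mm v w) * (c v - c w))"
    by (rule sum_mono2[OF finW]) (use mn cw in auto)
  also have "\<dots> = Pc c w" using wW by (simp add: Pc_eval)
  finally have "nu \<pi> w + 1 \<le> Pc c w" using wW by (simp add: nu_def)
  then have "E w < 0" using c[rule_format, of w] by simp
  then show False using E by (metis effective_def not_le)
qed

lemma Pc_ind_out:
  assumes "w \<in> W" "w \<notin> S"
  shows "Pc (\<lambda>x. if x \<in> S then k else 0) w = k * (\<Sum>v\<in>W \<inter> S. int (mm v w))"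
proof -
  have "Pc (\<lambda>x. if x \<in> S then k else 0) w = (\<Sum>v\<in>W. if v \<in> S then k * int (mm v w) else 0)"
    using assms by (simp add: Pc_eval) (intro sum.cong, auto)
  also have "\<dots> = (\<Sum>v\<in>W \<inter> S. k * int (mm v w))"
    by (simp add: sum.inter_restrict[OF finW])
  finally show ?thesis by (simp add: sum_distrib_left)
qed

lemma stepA_gen:
  "\<forall>S. card (W - S) = n \<longrightarrow> S \<subseteq> W \<longrightarrow> S \<noteq> {} \<longrightarrow>
     (\<forall>D. \<exists>D'. lin_equiv W mm D D' \<and> (\<forall>v\<in>W-S. 0 \<le> D' v))"
proof (induction n)
  case 0
  then show ?case using finW le_refl by auto
next
  case (Suc n)
  show ?case
  proof (intro allI impI)
    fix S D assume cS: "card (W - S) = Suc n" and SW: "S \<subseteq> W" and Sne: "S \<noteq> {}"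
    have "S \<noteq> W" using cS by auto
    then obtain a b where ab: "a \<in> S" "b \<in> W - S" "0 < mm a b" using conn[OF SW Sne] by blast
    have "card (W - insert b S) = n" using cS ab finW
      by (metis Diff_insert card_Diff_singleton diff_Suc_1)
    moreover have "insert b S \<subseteq> W" using SW ab by auto
    ultimately obtain D1 where D1: "lin_equiv W mm D D1" "\<forall>v\<in>W - insert b S. 0 \<le> D1 v"
      using Suc.IH[rule_format, of "insert b S" D] by blast
    define k where "k = \<bar>D1 b\<bar>"
    define D2 where "D2 = (\<lambda>x. D1 x + Pc (\<lambda>x. if x \<in> S then k else 0) x)"
    have "lin_equiv W mm D1 D2"
      unfolding le_iff D2_def by (rule exI[of _ "\<lambda>x. - (if x \<in> S then k else 0)"]) (simp add: Pc_neg)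
    then have "lin_equiv W mm D D2" using D1 le_trans by blast
    moreover have "\<forall>v\<in>W-S. 0 \<le> D2 v"
    proof
      fix v assume v: "v \<in> W - S"
      have nn: "0 \<le> (\<Sum>u\<in>W \<inter> S. int (mm u v))" by (simp add: sum_nonneg)
      have k0: "0 \<le> k" by (simp add: k_def)
      show "0 \<le> D2 v"
      proof (cases "v = b")
        case True
        have "int (mm a b) \<le> (\<Sum>u\<in>W \<inter> S. int (mm u b))"
          using ab SW finW by (intro member_le_sum) (auto simp: symm[of a b])
        then have "1 \<le> (\<Sum>u\<in>W \<inter> S. int (mm u b))" using ab(3) by simp
        then have "k \<le> k * (\<Sum>u\<in>W \<inter> S. int (mm u b))" using k0
          by (metis mult.right_neutral mult_left_mono)
        then show ?thesis using True v by (simp add: D2_def Pc_ind_out k_def)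
      next
        case False
        then show ?thesis using v D1(2) nn k0 by (simp add: D2_def Pc_ind_out)
      qed
    qed
    ultimately show "\<exists>D'. lin_equiv W mm D D' \<and> (\<forall>v\<in>W-S. 0 \<le> D' v)" by blast
  qed
qed

lemma stepA: "q \<in> W \<Longrightarrow> \<exists>D'. lin_equiv W mm D D' \<and> (\<forall>v\<in>W-{q}. 0 \<le> D' v)"
  using stepA_gen by blast

lemma build_order_gen:
  fixes D' :: "'b \<Rightarrow> int"
  assumes burn: "\<And>B. q \<in> B \<Longrightarrow> B \<subseteq> W \<Longrightarrow> B \<noteq> W \<Longrightarrow> (\<exists>v\<in>W-B. D' v < (\<Sum>w\<in>B. int (mm v w)))"
  shows "\<forall>B. card (W - B) = n \<longrightarrow> q \<in> B \<longrightarrow> B \<subseteq> W \<longrightarrow>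
     (\<exists>\<pi>::'b\<Rightarrow>int. inj_on \<pi> B \<and> (\<forall>u\<in>B-{q}. D' u < (\<Sum>w\<in>{w\<in>B. \<pi> w < \<pi> u}. int (mm u w)))) \<longrightarrow>
     (\<exists>\<pi>::'b\<Rightarrow>int. inj_on \<pi> W \<and> (\<forall>u\<in>W-{q}. D' u < (\<Sum>w\<in>{w\<in>W. \<pi> w < \<pi> u}. int (mm u w))))"
proof (induction n)
  case 0
  show ?case
  proof (intro allI impI)
    fix B assume "card (W - B) = 0" "B \<subseteq> W"
    then have "B = W" using finW by auto
    then show "(\<exists>\<pi>::'b\<Rightarrow>int. inj_on \<pi> B \<and> (\<forall>u\<in>B-{q}. D' u < (\<Sum>w\<in>{w\<in>B. \<pi> w < \<pi> u}. int (mm u w)))) \<Longrightarrow>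
     (\<exists>\<pi>::'b\<Rightarrow>int. inj_on \<pi> W \<and> (\<forall>u\<in>W-{q}. D' u < (\<Sum>w\<in>{w\<in>W. \<pi> w < \<pi> u}. int (mm u w))))" by simp
  qed
next
  case (Suc n)
  show ?case
  proof (intro allI impI)
    fix B assume cB: "card (W - B) = Suc n" and qB: "q \<in> B" and BW: "B \<subseteq> W"
    assume "\<exists>\<pi>::'b\<Rightarrow>int. inj_on \<pi> B \<and> (\<forall>u\<in>B-{q}. D' u < (\<Sum>w\<in>{w\<in>B. \<pi> w < \<pi> u}. int (mm u w)))"
    then obtain \<pi> :: "'b \<Rightarrow> int" where inj: "inj_on \<pi> B" and cond: "\<forall>u\<in>B-{q}. D' u < (\<Sum>w\<in>{w\<in>B. \<pi> w < \<pi> u}. int (mm u w))"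
      by blast
    have "B \<noteq> W" using cB by auto
    then obtain v where v: "v \<in> W - B" "D' v < (\<Sum>w\<in>B. int (mm v w))" using burn qB BW by blast
    have finB: "finite B" using BW finW finite_subset by blast
    define t where "t = Max (\<pi> ` B) + 1"
    have tgt: "\<And>x. x \<in> B \<Longrightarrow> \<pi> x < t" unfolding t_def using finB by (simp add: le_imp_less_Suc)
    define \<pi>' where "\<pi>' = \<pi>(v := t)"
    have inj': "inj_on \<pi>' (insert v B)"
      using inj v tgt unfolding \<pi>'_def inj_on_def by (metis fun_upd_apply insert_iff less_irrefl)
    have cond': "\<forall>u\<in>insert v B-{q}. D' u < (\<Sum>w\<in>{w\<in>insert v B. \<pi>' w < \<pi>' u}. int (mm u w))"
    proof
      fix u assume u: "u \<in> insert v B - {q}"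
      show "D' u < (\<Sum>w\<in>{w\<in>insert v B. \<pi>' w < \<pi>' u}. int (mm u w))"
      proof (cases "u = v")
        case True
        have "{w\<in>insert v B. \<pi>' w < \<pi>' u} = B" using True tgt v unfolding \<pi>'_def by auto
        then show ?thesis using True v by simp
      next
        case False
        then have uB: "u \<in> B" "u \<noteq> q" using u by auto
        have "{w\<in>insert v B. \<pi>' w < \<pi>' u} = {w\<in>B. \<pi> w < \<pi> u}"
          using False tgt[OF uB(1)] v uB unfolding \<pi>'_def by auto
        then show ?thesis using cond uB by simp
      qed
    qed
    have "card (W - insert v B) = n" using cB v finW
      by (metis Diff_insert card_Diff_singleton diff_Suc_1)
    moreover have "insert v B \<subseteq> W" using v BW by auto
    ultimately show "\<exists>\<pi>::'b\<Rightarrow>int. inj_on \<pi> W \<and> (\<forall>u\<in>W-{q}. D' u < (\<Sum>w\<in>{w\<in>W. \<pi> w < \<pi> u}. int (mm u w)))"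
      using Suc.IH[rule_format, of "insert v B"] qB inj' cond' by blast
  qed
qed

lemma build_order:
  fixes D' :: "'b \<Rightarrow> int"
  assumes "q \<in> W"
  and burn: "\<And>B. q \<in> B \<Longrightarrow> B \<subseteq> W \<Longrightarrow> B \<noteq> W \<Longrightarrow> (\<exists>v\<in>W-B. D' v < (\<Sum>w\<in>B. int (mm v w)))"
  shows "\<exists>\<pi>::'b\<Rightarrow>int. inj_on \<pi> W \<and> (\<forall>u\<in>W-{q}. D' u < (\<Sum>w\<in>{w\<in>W. \<pi> w < \<pi> u}. int (mm u w)))"
proof -
  have "inj_on (\<lambda>_. 0::int) {q}" by simp
  then show ?thesis using build_order_gen[OF burn, where n="card (W - {q})", rule_format, of q "{q}"] assms(1)
    by auto
qed

lemma RR1: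
  assumes D: "is_div W D"
  shows "(\<exists>E. effective W E \<and> lin_equiv W mm D E) \<or>
         (\<exists>\<pi> F. inj_on \<pi> W \<and> effective W F \<and> lin_equiv W mm (\<lambda>x. nu \<pi> x - D x) F)"
proof -
  obtain q where q: "q \<in> W" using neW by blast
  define Sset where "Sset = {D'. is_div W D' \<and> lin_equiv W mm D D' \<and> (\<forall>v\<in>W-{q}. 0 \<le> D' v)}"
  obtain D1 where D1: "lin_equiv W mm D D1" "\<forall>v\<in>W-{q}. 0 \<le> D1 v" using stepA[OF q] by blast
  have D1S: "D1 \<in> Sset" using D1 le_div D by (auto simp: Sset_def)
  have bnd: "D' q \<le> deg W D \<and> (\<forall>x\<in>W-{q}. D' q + D' x \<le> deg W D)" if "D' \<in> Sset" for D'
  proof -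
    have nn: "\<forall>v\<in>W-{q}. 0 \<le> D' v" and le: "lin_equiv W mm D D'" using that by (auto simp: Sset_def)
    have "deg W D = D' q + (\<Sum>v\<in>W-{q}. D' v)"
      using le_deg[OF le] q finW by (simp add: deg_def sum.remove)
    moreover have "0 \<le> (\<Sum>v\<in>W-{q}. D' v)" by (rule sum_nonneg) (use nn in auto)
    moreover have "\<forall>x\<in>W-{q}. D' x \<le> (\<Sum>v\<in>W-{q}. D' v)"
      using nn finW by (auto intro!: member_le_sum)
    ultimately show ?thesis by force
  qed
  define Qs where "Qs = (\<lambda>D'. D' q) ` Sset \<inter> {D1 q..deg W D}"
  have finQs: "finite Qs" by (simp add: Qs_def)
  have D1Q: "D1 q \<in> Qs" using D1S bnd[OF D1S] by (auto simp: Qs_def)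
  define M where "M = Max Qs"
  have "M \<in> Qs" unfolding M_def using finQs D1Q by (intro Max_in) auto
  then obtain D2 where D2: "D2 \<in> Sset" "D2 q = M" by (auto simp: Qs_def)
  have maxM: "D' q \<le> M" if "D' \<in> Sset" for D'
  proof (cases "D1 q \<le> D' q")
    case True
    then have "D' q \<in> Qs" using that bnd[OF that] by (auto simp: Qs_def)
    then show ?thesis unfolding M_def using finQs by simp
  next
    case False
    have "D1 q \<le> M" unfolding M_def using finQs D1Q by simp
    then show ?thesis using False by simp
  qed
  define SM where "SM = {D'\<in>Sset. D' q = M}"
  have finSM: "finite SM"
  proof (rule finite_subset)
    show "SM \<subseteq> {f::'b \<Rightarrow> int. (\<forall>x. x \<notin> W \<longrightarrow> f x = 0) \<and> (\<forall>x\<in>W. f x \<in> {min 0 M..max M (deg W D - M)})}"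
    proof safe
      fix f assume f: "f \<in> SM"
      then have fS: "f \<in> Sset" and fq: "f q = M" by (auto simp: SM_def)
      then show "\<And>x. x \<notin> W \<Longrightarrow> f x = 0" by (auto simp: Sset_def is_div_def)
      fix x assume x: "x \<in> W"
      show "f x \<in> {min 0 M..max M (deg W D - M)}"
      proof (cases "x = q")
        case True then show ?thesis using fq by simp
      next
        case False
        then have "0 \<le> f x" "f q + f x \<le> deg W D" using fS x bnd[OF fS] by (auto simp: Sset_def)
        then show ?thesis using fq by (simp add: min_def max_def)
      qed
    qed
    show "finite {f::'b \<Rightarrow> int. (\<forall>x. x \<notin> W \<longrightarrow> f x = 0) \<and> (\<forall>x\<in>W. f x \<in> {min 0 M..max M (deg W D - M)})}"
      by (rule finite_bounded_funs[OF finW]) simp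
  qed
  define Cs where "Cs = {c. (\<forall>x. x \<notin> W \<longrightarrow> c x = 0) \<and> c q = 0 \<and> (\<lambda>x. D x - Pc c x) \<in> SM}"
  have injC: "inj_on (\<lambda>c x. D x - Pc c x) Cs"
  proof (rule inj_onI)
    fix c c' assume c: "c \<in> Cs" and c': "c' \<in> Cs" and eq: "(\<lambda>x. D x - Pc c x) = (\<lambda>x. D x - Pc c' x)"
    have "\<forall>w\<in>W. Pc (\<lambda>x. c x - c' x) w = 0" using eq by (simp add: Pc_diff fun_eq_iff)
    then have "\<And>x. x \<in> W \<Longrightarrow> c x - c' x = c q - c' q" using kernel q by blast
    then show "c = c'" using c c' by (auto simp: Cs_def fun_eq_iff) (metis eq_iff_diff_eq_0)
  qed
  have finC: "finite Cs"
    by (rule finite_imageD[OF finite_subset[OF _ finSM] injC]) (auto simp: Cs_def)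
  have Cne: "Cs \<noteq> {}"
  proof -
    obtain c where c: "\<forall>x. D x - D2 x = Pc c x" using D2 by (auto simp: Sset_def le_iff)
    define c' where "c' = (\<lambda>x. if x \<in> W then c x - c q else 0)"
    have "Pc c' = Pc (\<lambda>x. c x - c q)" unfolding c'_def by (rule Pc_cong) simp
    then have "\<And>w. Pc c' w = Pc c w" by (simp add: Pc_diff Pc_const)
    then have "(\<lambda>x. D x - Pc c' x) = D2"
    proof (intro ext)
      fix x assume h: "\<And>w. Pc c' w = Pc c w"
      show "D x - Pc c' x = D2 x" using c[rule_format, of x] h[of x] by simp
    qed
    then have "c' \<in> Cs" using D2 q by (auto simp: Cs_def c'_def SM_def)
    then show ?thesis by blast
  qed
  define smin where "smin = Min ((\<lambda>c. \<Sum>v\<in>W. c v) ` Cs)"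
  have "smin \<in> (\<lambda>c. \<Sum>v\<in>W. c v) ` Cs" unfolding smin_def using finC Cne by (intro Min_in) auto
  then obtain c0 where c0: "c0 \<in> Cs" "(\<Sum>v\<in>W. c0 v) = smin" by auto
  have minc: "smin \<le> (\<Sum>v\<in>W. c v)" if "c \<in> Cs" for c unfolding smin_def using finC that by simp
  define D' where "D' = (\<lambda>x. D x - Pc c0 x)"
  have D'SM: "D' \<in> SM" using c0 by (simp add: Cs_def D'_def)
  then have D'S: "D' \<in> Sset" and D'q: "D' q = M" by (auto simp: SM_def)
  have D'div: "is_div W D'" and D'le: "lin_equiv W mm D D'" and D'nn: "\<forall>v\<in>W-{q}. 0 \<le> D' v"
    using D'S by (auto simp: Sset_def)
  show ?thesis
  proof (cases "0 \<le> M")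
    case True
    have "effective W D'"
      unfolding effective_def
    proof (intro conjI allI D'div)
      fix v show "0 \<le> D' v"
        using D'div D'nn D'q True by (cases "v \<in> W"; cases "v = q") (auto simp: is_div_def)
    qed
    then show ?thesis using D'le by blast
  next
    case False
    have burn: "\<exists>v\<in>W-B. D' v < (\<Sum>w\<in>B. int (mm v w))" if B: "q \<in> B" "B \<subseteq> W" "B \<noteq> W" for B
    proof (rule ccontr)
      assume "\<not> (\<exists>v\<in>W-B. D' v < (\<Sum>w\<in>B. int (mm v w)))"
      then have st: "\<forall>v\<in>W-B. (\<Sum>w\<in>B. int (mm v w)) \<le> D' v" by (meson not_le)
      define U where "U = W - B"
      have Une: "U \<noteq> {}" using B by (auto simp: U_def)
      define ind where "ind = (\<lambda>x. if x \<in> U then 1 else (0::int))"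
      define c1 where "c1 = (\<lambda>x. c0 x - ind x)"
      define D'' where "D'' = (\<lambda>x. D x - Pc c1 x)"
      have D''eq: "D'' x = D' x + Pc ind x" for x
        by (simp add: D''_def D'_def c1_def Pc_diff)
      have "ind = (\<lambda>x. 1 - (if x \<in> -U then 1 else 0))" by (auto simp: ind_def fun_eq_iff)
      then have PU: "Pc ind w = - (\<Sum>v\<in>B. int (mm v w))" if "w \<in> U" for w
      proof -
        assume "ind = (\<lambda>x. 1 - (if x \<in> -U then 1 else 0))"
        then have "Pc ind w = - Pc (\<lambda>x. if x \<in> -U then 1 else 0) w"
          by (simp add: Pc_diff Pc_const)
        also have "\<dots> = - (\<Sum>v\<in>W \<inter> -U. int (mm v w))"
          using that by (subst Pc_ind_out) (auto simp: U_def)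
        also have "W \<inter> -U = B" using B by (auto simp: U_def)
        finally show ?thesis .
      qed
      have PB: "0 \<le> Pc ind w" if "w \<in> B" for w
        using that B Pc_ind_out[of w U 1] by (auto simp: ind_def U_def sum_nonneg)
      have indout: "Pc ind w = 0" if "w \<notin> W" for w using that Pc_out by simp
      have D''S: "D'' \<in> Sset"
      proof -
        have "is_div W D''" using D'div indout by (auto simp: is_div_def D''eq)
        moreover have "lin_equiv W mm D D''" unfolding le_iff D''_def by auto
        moreover have "\<forall>v\<in>W-{q}. 0 \<le> D'' v"
        proof
          fix v assume v: "v \<in> W - {q}"
          show "0 \<le> D'' v"
          proof (cases "v \<in> U")
            case True
            then have "(\<Sum>w\<in>B. int (mm v w)) \<le> D' v" using st by (auto simp: U_def)
            moreover have "(\<Sum>w\<in>B. int (mm v w)) = (\<Sum>w\<in>B. int (mm w v))" by (simp add: symm)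
            ultimately show ?thesis using PU[OF True] by (simp add: D''eq)
          next
            case False
            then have "v \<in> B" using v by (auto simp: U_def)
            then show ?thesis using PB D'nn v by (simp add: D''eq)
          qed
        qed
        ultimately show ?thesis by (simp add: Sset_def)
      qed
      have "D'' q = M"
        using maxM[OF D''S] PB[OF B(1)] D''eq[of q] D'q by simp
      then have "D'' \<in> SM" using D''S by (simp add: SM_def)
      moreover have "\<forall>x. x \<notin> W \<longrightarrow> c1 x = 0" using c0 by (auto simp: Cs_def c1_def ind_def U_def)
      moreover have "c1 q = 0" using c0 B by (auto simp: Cs_def c1_def ind_def U_def)
      ultimately have c1C: "c1 \<in> Cs" by (simp add: Cs_def D''_def)
      have "(\<Sum>v\<in>W. ind v) = (\<Sum>v\<in>W \<inter> U. 1)" unfolding ind_def using sum.inter_restrict[OF finW, of "\<lambda>_. 1::int" U] by simp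
      also have "\<dots> = int (card U)" by (simp add: U_def Int_absorb1)
      finally have "(\<Sum>v\<in>W. c1 v) = (\<Sum>v\<in>W. c0 v) - int (card U)"
        by (simp add: c1_def sum_subtractf)
      moreover have "0 < card U" using Une finW by (simp add: U_def card_gt_0_iff)
      ultimately have "(\<Sum>v\<in>W. c1 v) < smin" using c0 by simp
      then show False using minc[OF c1C] by simp
    qed
    obtain \<pi> :: "'b \<Rightarrow> int" where \<pi>: "inj_on \<pi> W" "\<forall>u\<in>W-{q}. D' u < (\<Sum>w\<in>{w\<in>W. \<pi> w < \<pi> u}. int (mm u w))"
      using build_order[OF q, of D'] burn by blast
    define F where "F = (\<lambda>x. nu \<pi> x - D' x)"
    have "effective W F"
      unfolding effective_def
    proof (intro conjI allI)
      show "is_div W F" using D'div by (simp add: is_div_def F_def nu_def)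
      fix v show "0 \<le> F v"
      proof (cases "v \<in> W")
        case False then show ?thesis using D'div by (simp add: is_div_def F_def nu_def)
      next
        case True
        show ?thesis
        proof (cases "v = q")
          case True
          have "0 \<le> (\<Sum>w\<in>{w\<in>W. \<pi> w < \<pi> v}. int (mm v w))" by (simp add: sum_nonneg)
          then show ?thesis using True \<open>v \<in> W\<close> D'q False by (simp add: F_def nu_def)
        next
          case False
          then show ?thesis using \<pi>(2) \<open>v \<in> W\<close> by (simp add: F_def nu_def)
        qed
      qed
    qed
    moreover have "lin_equiv W mm (\<lambda>x. nu \<pi> x - D x) F"
      unfolding le_iff F_def D'_def by (rule exI[of _ "\<lambda>x. - c0 x"]) (simp add: Pc_neg)
    ultimately show ?thesis using \<pi>(1) by blast
  qed
qed

end

context lg begin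

definition pd :: "('b \<Rightarrow> int) \<Rightarrow> int" where
  "pd X = (\<Sum>v\<in>W. max (X v) 0)"

lemma pd_nonneg: "0 \<le> pd X" unfolding pd_def by (rule sum_nonneg) simp

lemma pd_neg: "pd (\<lambda>x. - X x) = pd X - deg W X"
proof -
  have "pd (\<lambda>x. - X x) = (\<Sum>v\<in>W. max (X v) 0 - X v)" unfolding pd_def
    by (intro sum.cong) (auto simp: max_def)
  then show ?thesis by (simp add: pd_def deg_def sum_subtractf)
qed

definition Qm :: "('b \<Rightarrow> int) \<Rightarrow> nat \<Rightarrow> bool" where
  "Qm D n = (\<exists>D' (\<pi>::'b\<Rightarrow>int). lin_equiv W mm D D' \<and> inj_on \<pi> W \<and> pd (\<lambda>x. D' x - nu \<pi> x) = int n)"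

definition m0 :: "('b \<Rightarrow> int) \<Rightarrow> nat" where
  "m0 D = (LEAST n::nat. Qm D n)"

lemma m0_ex: "\<exists>D' (\<pi>::'b\<Rightarrow>int). lin_equiv W mm D D' \<and> inj_on \<pi> W \<and> pd (\<lambda>x. D' x - nu \<pi> x) = int (m0 D)"
proof -
  obtain \<pi>0 :: "'b \<Rightarrow> int" where "inj_on \<pi>0 W" using exists_inj_int[OF finW] by blast
  then have "\<exists>D' (\<pi>::'b\<Rightarrow>int). lin_equiv W mm D D' \<and> inj_on \<pi> W \<and> pd (\<lambda>x. D' x - nu \<pi> x) = int (nat (pd (\<lambda>x. D x - nu \<pi>0 x)))"
    using le_refl pd_nonneg by auto
  then have "Qm D (nat (pd (\<lambda>x. D x - nu \<pi>0 x)))" unfolding Qm_def .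
  then have "Qm D (m0 D)" unfolding m0_def by (rule LeastI)
  then show ?thesis unfolding Qm_def .
qed

lemma m0_le: "lin_equiv W mm D D' \<Longrightarrow> inj_on \<pi> W \<Longrightarrow> int (m0 D) \<le> pd (\<lambda>x. D' x - nu \<pi> x)"
proof -
  assume a: "lin_equiv W mm D D'" "inj_on \<pi> W"
  have "Qm D (nat (pd (\<lambda>x. D' x - nu \<pi> x)))" unfolding Qm_def
    by (intro exI[of _ D'] exI[of _ \<pi>]) (use a pd_nonneg in auto)
  then have "m0 D \<le> nat (pd (\<lambda>x. D' x - nu \<pi> x))" unfolding m0_def by (rule Least_le)
  then show ?thesis using pd_nonneg[of "\<lambda>x. D' x - nu \<pi> x"] by linarith
qed

lemma eff_deg0: "effective W E \<Longrightarrow> deg W E = 0 \<Longrightarrow> E = (\<lambda>_. 0)"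
proof -
  assume E: "effective W E" "deg W E = 0"
  then have "\<forall>v\<in>W. E v = 0" using finW by (simp add: deg_def effective_def sum_nonneg_eq_0_iff)
  then show ?thesis using E by (auto simp: effective_def is_div_def fun_eq_iff)
qed

lemma rank_char:
  assumes D: "is_div W D"
  shows "rank W mm D = int (m0 D) - 1"
proof -
  obtain q where q: "q \<in> W" using neW by blast
  obtain D0 and \<pi>0 :: "'b \<Rightarrow> int" where w0: "lin_equiv W mm D D0" "inj_on \<pi>0 W" "pd (\<lambda>x. D0 x - nu \<pi>0 x) = int (m0 D)"
    using m0_ex by blast
  have D0div: "is_div W D0" using le_div[OF w0(1) D] .
  define P where "P = (\<lambda>k::nat. \<forall>E. effective W E \<and> deg W E = int k \<longrightarrow>
                 (\<exists>F. effective W F \<and> lin_equiv W mm (\<lambda>x. D x - E x) F))"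
  have notP: "\<not> P k" if k: "m0 D \<le> k" for k
  proof
    assume Pk: "P k"
    define E where "E = (\<lambda>x. max (D0 x - nu \<pi>0 x) 0 + (if x = q then int k - int (m0 D) else 0))"
    have Ediv: "is_div W E" using D0div nu_div q by (auto simp: is_div_def E_def)
    have Enn: "\<forall>x. 0 \<le> E x" using k by (simp add: E_def)
    have "deg W E = pd (\<lambda>x. D0 x - nu \<pi>0 x) + (\<Sum>x\<in>W. if x = q then int k - int (m0 D) else 0)"
      unfolding deg_def E_def pd_def by (simp add: sum.distrib)
    also have "\<dots> = int k" using w0(3) q finW by simp
    finally have "deg W E = int k" .
    then obtain F where F: "effective W F" "lin_equiv W mm (\<lambda>x. D x - E x) F"
      using Pk Ediv Enn unfolding P_def effective_def by blast
    have "lin_equiv W mm (\<lambda>x. D0 x - E x) F"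
      using le_trans[OF le_sub[OF le_sym[OF w0(1)]] F(2)] .
    then obtain c where c: "\<forall>x. (D0 x - E x) - F x = Pc c x" by (auto simp: le_iff)
    define G where "G = (\<lambda>x. F x + (nu \<pi>0 x - D0 x + E x))"
    have "effective W G"
      using F(1) Ediv D0div nu_div[of \<pi>0] k unfolding effective_def G_def is_div_def E_def
      by (auto simp: max_def)
    moreover have "lin_equiv W mm (nu \<pi>0) G"
      unfolding le_iff G_def
    proof (rule exI[of _ c], intro allI)
      fix x show "nu \<pi>0 x - (F x + (nu \<pi>0 x - D0 x + E x)) = Pc c x" using c[rule_format, of x] by linarith
    qed
    ultimately show False using nu_not_eff[OF w0(2)] by blast
  qed
  have yesP: "P k" if k: "k < m0 D" for k
    unfolding P_def
  proof (intro allI impI)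
    fix E assume E: "effective W E \<and> deg W E = int k"
    show "\<exists>F. effective W F \<and> lin_equiv W mm (\<lambda>x. D x - E x) F"
    proof (rule ccontr)
      assume no: "\<not> ?thesis"
      have "is_div W (\<lambda>x. D x - E x)" using D E by (auto simp: is_div_def effective_def)
      then obtain \<pi> F where F: "inj_on \<pi> W" "effective W F" "lin_equiv W mm (\<lambda>x. nu \<pi> x - (D x - E x)) F"
        using RR1 no by blast
      obtain c where c: "\<forall>x. (nu \<pi> x - (D x - E x)) - F x = Pc c x" using F(3) by (auto simp: le_iff)
      define D'' where "D'' = (\<lambda>x. nu \<pi> x + E x - F x)"
      have "lin_equiv W mm D D''"
        unfolding le_iff D''_def
      proof (rule exI[of _ "\<lambda>x. - c x"], intro allI)
        fix x show "D x - (nu \<pi> x + E x - F x) = Pc (\<lambda>x. - c x) x"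
          using c[rule_format, of x] Pc_neg[of c x] by linarith
      qed
      then have "int (m0 D) \<le> pd (\<lambda>x. D'' x - nu \<pi> x)" using m0_le F(1) by blast
      also have "\<dots> \<le> (\<Sum>v\<in>W. E v)" unfolding pd_def D''_def
        by (rule sum_mono) (use E F(2) in \<open>auto simp: effective_def\<close>)
      also have "\<dots> = int k" using E by (simp add: deg_def)
      finally show False using k by simp
    qed
  qed
  show ?thesis
  proof (cases "m0 D = 0")
    case True
    then obtain E where E: "effective W E" "deg W E = 0"
      and no: "\<not> (\<exists>F. effective W F \<and> lin_equiv W mm (\<lambda>x. D x - E x) F)"
      using notP[of 0] unfolding P_def by auto
    have "E = (\<lambda>_. 0)" using eff_deg0 E by blast
    then have "\<not> (\<exists>F. effective W F \<and> lin_equiv W mm D F)" using no by simp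
    then show ?thesis using True by (simp add: rank_def)
  next
    case False
    have "P 0" using yesP False by simp
    moreover have "effective W (\<lambda>_. 0)" by (simp add: effective_def is_div_def)
    moreover have "deg W (\<lambda>_. 0) = int 0" by (simp add: deg_def)
    ultimately obtain F where "effective W F" "lin_equiv W mm (\<lambda>x. D x - 0) F"
      unfolding P_def by blast
    then have ex: "\<exists>F. effective W F \<and> lin_equiv W mm D F" by auto
    have "(GREATEST k. P k) = m0 D - 1"
    proof (rule Greatest_equality)
      show "P (m0 D - 1)" using yesP False by simp
      fix y assume Py: "P y"
      show "y \<le> m0 D - 1"
      proof (rule ccontr)
        assume "\<not> y \<le> m0 D - 1"
        then have "m0 D \<le> y" by arith
        then show False using notP Py by blast
      qed
    qed
    then show ?thesis using ex False unfolding rank_def P_def by simp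
  qed
qed

lemma m0_dual:
  assumes D: "is_div W D" and inj0: "inj_on \<pi>0 W"
  shows "int (m0 (\<lambda>x. KK x - D x)) \<le> int (m0 D) - deg W D + deg W (nu \<pi>0)"
proof -
  obtain D' and \<pi> :: "'b \<Rightarrow> int" where w: "lin_equiv W mm D D'" "inj_on \<pi> W" "pd (\<lambda>x. D' x - nu \<pi> x) = int (m0 D)"
    using m0_ex by blast
  define D'' where "D'' = (\<lambda>x. KK x - D' x)"
  obtain c where c: "\<forall>x. D x - D' x = Pc c x" using w(1) by (auto simp: le_iff)
  have le: "lin_equiv W mm (\<lambda>x. KK x - D x) D''"
    unfolding le_iff D''_def
  proof (rule exI[of _ "\<lambda>x. - c x"], intro allI)
    fix x show "KK x - D x - (KK x - D' x) = Pc (\<lambda>x. - c x) x"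
      using c[rule_format, of x] Pc_neg[of c x] by linarith
  qed
  have inj': "inj_on (\<lambda>x. - \<pi> x) W" using w(2) by (auto simp: inj_on_def)
  have "(\<lambda>x. D'' x - nu (\<lambda>x. - \<pi> x) x) = (\<lambda>x. - (D' x - nu \<pi> x))"
  proof (rule ext)
    fix x have "nu (\<lambda>x. - \<pi> x) x = KK x - nu \<pi> x" using nu_rev[OF w(2)] by simp
    then show "D'' x - nu (\<lambda>x. - \<pi> x) x = - (D' x - nu \<pi> x)" by (simp add: D''_def)
  qed
  moreover have "pd (\<lambda>x. - (D' x - nu \<pi> x)) = int (m0 D) - deg W (\<lambda>x. D' x - nu \<pi> x)"
    using pd_neg[of "\<lambda>x. D' x - nu \<pi> x"] w(3) by simp
  ultimately have "pd (\<lambda>x. D'' x - nu (\<lambda>x. - \<pi> x) x) = int (m0 D) - deg W (\<lambda>x. D' x - nu \<pi> x)"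
    by simp
  also have "deg W (\<lambda>x. D' x - nu \<pi> x) = deg W D - deg W (nu \<pi>0)"
    using deg_diff le_deg[OF w(1)] deg_nu[OF w(2)] deg_nu[OF inj0] by simp
  finally show ?thesis using m0_le[OF le inj'] by simp
qed

lemma RR:
  assumes D: "is_div W D" and inj0: "inj_on \<pi>0 W"
  shows "rank W mm D - rank W mm (\<lambda>x. KK x - D x) = deg W D - deg W (nu \<pi>0)"
proof -
  have KD: "is_div W (\<lambda>x. KK x - D x)" using D KK_div by (simp add: is_div_def)
  have a: "int (m0 (\<lambda>x. KK x - D x)) \<le> int (m0 D) - deg W D + deg W (nu \<pi>0)" using m0_dual[OF D inj0] .
  have b: "int (m0 (\<lambda>x. KK x - (KK x - D x))) \<le> int (m0 (\<lambda>x. KK x - D x)) - deg W (\<lambda>x. KK x - D x) + deg W (nu \<pi>0)"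
    using m0_dual[OF KD inj0] .
  have "(\<lambda>x. KK x - (KK x - D x)) = D" by simp
  moreover have "deg W (\<lambda>x. KK x - D x) = 2 * deg W (nu \<pi>0) - deg W D"
    using deg_diff deg_nu[OF inj0] by simp
  ultimately have b': "int (m0 D) \<le> int (m0 (\<lambda>x. KK x - D x)) + deg W D - deg W (nu \<pi>0)" using b by simp
  show ?thesis using a b' rank_char[OF D] rank_char[OF KD] by simp
qed

lemma rank_inv:
  assumes "lin_equiv W mm D D'"
  shows "rank W mm D = rank W mm D'"
proof -
  have e1: "(\<exists>E. effective W E \<and> lin_equiv W mm D E) = (\<exists>E. effective W E \<and> lin_equiv W mm D' E)"
    using assms le_trans le_sym by blast
  have e2: "lin_equiv W mm (\<lambda>x. D x - E x) F = lin_equiv W mm (\<lambda>x. D' x - E x) F" for E F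
    using le_sub[OF assms, of E] le_sub[OF le_sym[OF assms], of E] le_trans by blast
  show ?thesis unfolding rank_def e1 e2 ..
qed

end


lemma hat_V_eq: "hat_V V M = Inl ` V \<union> Inr ` (SIGMA v:V. {..<M v v})"
  by (auto simp: hat_V_def)

lemma hat_sum:
  fixes f :: "('a + 'a \<times> nat) \<Rightarrow> 'c::comm_monoid_add"
  assumes fin: "finite V"
  shows "(\<Sum>x\<in>hat_V V M. f x) = (\<Sum>v\<in>V. f (Inl v)) + (\<Sum>v\<in>V. \<Sum>i<M v v. f (Inr (v, i)))"
proof -
  have f1: "finite (Inl ` V :: ('a + 'a \<times> nat) set)" using fin by (rule finite_imageI)
  have fS: "finite (SIGMA v:V. {..<M v v})" using fin by (intro finite_SigmaI) auto
  have f2: "finite (Inr ` (SIGMA v:V. {..<M v v}) :: ('a + 'a \<times> nat) set)" using fS by (rule finite_imageI)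
  have dj: "(Inl ` V :: ('a + 'a \<times> nat) set) \<inter> Inr ` (SIGMA v:V. {..<M v v}) = {}" by blast
  have "(\<Sum>x\<in>hat_V V M. f x) = (\<Sum>x\<in>Inl ` V. f x) + (\<Sum>x\<in>Inr ` (SIGMA v:V. {..<M v v}). f x)"
    unfolding hat_V_eq by (rule sum.union_disjoint[OF f1 f2 dj])
  also have "(\<Sum>x\<in>Inl ` V. f x) = (\<Sum>v\<in>V. f (Inl v))"
    by (rule sum.reindex_cong[where l=Inl]) (auto simp: inj_on_def)
  also have "(\<Sum>x\<in>Inr ` (SIGMA v:V. {..<M v v}). f x) = (\<Sum>p\<in>(SIGMA v:V. {..<M v v}). f (Inr p))"
    by (rule sum.reindex_cong[where l=Inr]) (auto simp: inj_on_def)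
  also have "\<dots> = (\<Sum>v\<in>V. \<Sum>i<M v v. f (Inr (v, i)))"
  proof -
    have "(\<Sum>v\<in>V. \<Sum>i<M v v. f (Inr (v, i))) = (\<Sum>(v, i)\<in>(SIGMA v:V. {..<M v v}). f (Inr (v, i)))"
      by (rule sum.Sigma[OF fin]) simp
    also have "\<dots> = (\<Sum>p\<in>(SIGMA v:V. {..<M v v}). f (Inr p))"
      by (rule sum.cong) auto
    finally show ?thesis by simp
  qed
  finally show ?thesis .
qed

lemma hat_m_simps [simp]:
  "hat_m M (Inl v) (Inl w) = (if v = w then 0 else M v w)"
  "hat_m M (Inl v) (Inr (w, i)) = (if v = w \<and> i < M v v then 2 else 0)"
  "hat_m M (Inr (w, i)) (Inl v) = (if v = w \<and> i < M v v then 2 else 0)"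
  "hat_m M (Inr p) (Inr p') = 0"
  by (simp_all add: hat_m_def split: prod.splits)

lemma ext_div_simps [simp]: "ext_div D (Inl v) = D v" "ext_div D (Inr p) = 0"
  by (simp_all add: ext_div_def)

lemma hat_noloop: "hat_m M x x = 0"
  by (cases x) auto

lemma hat_finite: "finite V \<Longrightarrow> finite (hat_V V M)"
  by (simp add: hat_V_eq)

lemma hat_val_sum:
  assumes "finite V" "x \<in> hat_V V M"
  shows "valency (hat_V V M) (hat_m M) x = (\<Sum>y\<in>hat_V V M. hat_m M x y)"
proof -
  have "(\<Sum>y\<in>hat_V V M. hat_m M x y) = hat_m M x x + (\<Sum>y\<in>hat_V V M - {x}. hat_m M x y)"
    by (rule sum.remove) (use assms hat_finite in auto)
  then show ?thesis by (simp add: valency_def hat_noloop)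
qed

lemma virt_multigraph:
  assumes "multigraph V m" shows "multigraph V (virt_m V m \<omega>)"
proof -
  have "{(x, y). 0 < m x y} \<subseteq> {(x, y). 0 < virt_m V m \<omega> x y}" by (auto simp: virt_m_def)
  then have "{(x, y). 0 < m x y}\<^sup>* \<subseteq> {(x, y). 0 < virt_m V m \<omega> x y}\<^sup>*" by (rule rtrancl_mono)
  moreover have fin: "finite V" and ne: "V \<noteq> {}" and sym: "\<And>v w. m v w = m w v"
    and supp: "\<And>v w. 0 < m v w \<Longrightarrow> v \<in> V \<and> w \<in> V"
    and con: "\<And>v w. v \<in> V \<Longrightarrow> w \<in> V \<Longrightarrow> (v, w) \<in> {(x, y). 0 < m x y}\<^sup>*"
    using assms unfolding multigraph_def by blast+
  moreover have "\<forall>v w. virt_m V m \<omega> v w = virt_m V m \<omega> w v"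
    unfolding virt_m_def using sym by auto
  moreover have "\<forall>v w. 0 < virt_m V m \<omega> v w \<longrightarrow> v \<in> V \<and> w \<in> V"
  proof (intro allI impI)
    fix v w assume "0 < virt_m V m \<omega> v w"
    then have "0 < m v w \<or> (v = w \<and> v \<in> V)" unfolding virt_m_def by (cases "v = w \<and> v \<in> V") auto
    then show "v \<in> V \<and> w \<in> V" using supp by blast
  qed
  ultimately show ?thesis unfolding multigraph_def by blast
qed

lemma hat_multigraph:
  assumes mg: "multigraph V M" shows "multigraph (hat_V V M) (hat_m M)"
proof -
  have fin: "finite V" and ne: "V \<noteq> {}" and sym: "\<And>v w. M v w = M w v"
    and supp: "\<And>v w. 0 < M v w \<Longrightarrow> v \<in> V \<and> w \<in> V"
    and con: "\<And>v w. v \<in> V \<Longrightarrow> w \<in> V \<Longrightarrow> (v, w) \<in> {(x, y). 0 < M x y}\<^sup>*"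
    using mg unfolding multigraph_def by blast+
  let ?R = "{(x, y). 0 < hat_m M x y}"
  have symh: "hat_m M x y = hat_m M y x" for x y
  proof (cases x)
    case (Inl a)
    then show ?thesis
    proof (cases y)
      case (Inl b) then show ?thesis using \<open>x = Inl a\<close> sym[of a b] by auto
    next
      case (Inr p) then show ?thesis using \<open>x = Inl a\<close> by (cases p) auto
    qed
  next
    case (Inr p)
    then show ?thesis by (cases y; cases p) auto
  qed
  have supph: "x \<in> hat_V V M \<and> y \<in> hat_V V M" if "0 < hat_m M x y" for x y
  proof -
    have supp': "v \<in> V" if "i < M v v" for v i
    proof -
      have "0 < M v v" using that by simp
      then show ?thesis using supp by blast
    qed
    show ?thesis using that supp supp' by (cases x; cases y) (auto simp: hat_V_def split: if_splits)
  qed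
  have LL: "(Inl v, Inl w) \<in> ?R\<^sup>*" if "(v, w) \<in> {(x, y). 0 < M x y}\<^sup>*" for v w
    using that
  proof (induction rule: rtrancl_induct)
    case base then show ?case by simp
  next
    case (step y z)
    show ?case
    proof (cases "y = z")
      case True then show ?thesis using step by simp
    next
      case False
      have "0 < M y z" using step(2) by simp
      then have "(Inl y, Inl z) \<in> ?R" using False by simp
      then show ?thesis using step.IH by (rule rtrancl_into_rtrancl[rotated])
    qed
  qed
  have base: "\<exists>v\<in>V. (x, Inl v) \<in> ?R\<^sup>* \<and> (Inl v, x) \<in> ?R\<^sup>*" if xin: "x \<in> hat_V V M" for x
  proof (cases x)
    case (Inl v)
    then have "v \<in> V" using xin by (auto simp: hat_V_def)
    then show ?thesis using Inl by blast
  next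
    case (Inr p)
    obtain v i where p: "x = Inr (v, i)" "v \<in> V" "i < M v v" using xin Inr by (cases p) (auto simp: hat_V_def)
    then have "(x, Inl v) \<in> ?R" "(Inl v, x) \<in> ?R" by simp_all
    then show ?thesis using p by blast
  qed
  have conh: "(x, y) \<in> ?R\<^sup>*" if xy: "x \<in> hat_V V M" "y \<in> hat_V V M" for x y
  proof -
    obtain v where v: "v \<in> V" "(x, Inl v) \<in> ?R\<^sup>*" using base[OF xy(1)] by blast
    obtain w where w: "w \<in> V" "(Inl w, y) \<in> ?R\<^sup>*" using base[OF xy(2)] by blast
    have vw: "(Inl v, Inl w) \<in> ?R\<^sup>*" using LL con v w by blast
    have "(x, Inl w) \<in> ?R\<^sup>*" by (rule rtrancl_trans[OF v(2) vw])
    then show ?thesis by (rule rtrancl_trans[OF _ w(2)])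
  qed
  have "finite (hat_V V M)" using fin by (simp add: hat_V_eq)
  moreover have "hat_V V M \<noteq> {}" using ne by (auto simp: hat_V_def)
  moreover have "\<forall>v w. hat_m M v w = hat_m M w v" using symh by blast
  moreover have "\<forall>v w. 0 < hat_m M v w \<longrightarrow> v \<in> hat_V V M \<and> w \<in> hat_V V M" using supph by blast
  moreover have "\<forall>v\<in>hat_V V M. \<forall>w\<in>hat_V V M. (v, w) \<in> ?R\<^sup>*" using conh by blast
  ultimately show ?thesis unfolding multigraph_def by (intro conjI)
qed

lemma hat_val_Inl:
  assumes "finite V" "v \<in> V"
  shows "valency (hat_V V M) (hat_m M) (Inl v) = valency V M v"
proof -
  have vin: "Inl v \<in> hat_V V M" using assms by (simp add: hat_V_def)
  have "valency (hat_V V M) (hat_m M) (Inl v) = (\<Sum>x\<in>hat_V V M. hat_m M (Inl v) x)"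
    using vin by (rule hat_val_sum[OF assms(1)])
  also have "\<dots> = (\<Sum>w\<in>V. hat_m M (Inl v) (Inl w)) + (\<Sum>w\<in>V. \<Sum>i<M w w. hat_m M (Inl v) (Inr (w, i)))"
    by (rule hat_sum[OF assms(1)])
  also have "(\<Sum>w\<in>V. hat_m M (Inl v) (Inl w)) = hat_m M (Inl v) (Inl v) + (\<Sum>w\<in>V-{v}. hat_m M (Inl v) (Inl w))"
    using assms by (rule sum.remove)
  also have "(\<Sum>w\<in>V-{v}. hat_m M (Inl v) (Inl w)) = (\<Sum>w\<in>V-{v}. M v w)"
    by (rule sum.cong) auto
  also have "(\<Sum>w\<in>V. \<Sum>i<M w w. hat_m M (Inl v) (Inr (w, i))) = (\<Sum>w\<in>V. if w = v then 2 * M v v else 0)"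
  proof (rule sum.cong)
    fix w assume "w \<in> V"
    show "(\<Sum>i<M w w. hat_m M (Inl v) (Inr (w, i))) = (if w = v then 2 * M v v else 0)"
      by (cases "w = v") simp_all
  qed simp
  also have "\<dots> = 2 * M v v" using assms by simp
  finally show ?thesis unfolding valency_def[of V M v] by simp
qed

lemma hat_val_Inr:
  assumes "finite V" "v \<in> V" "i < M v v"
  shows "valency (hat_V V M) (hat_m M) (Inr (v, i)) = 2"
proof -
  have vin: "Inr (v, i) \<in> hat_V V M" using assms by (simp add: hat_V_def)
  have "valency (hat_V V M) (hat_m M) (Inr (v, i)) = (\<Sum>x\<in>hat_V V M. hat_m M (Inr (v, i)) x)"
    using vin by (rule hat_val_sum[OF assms(1)])
  also have "\<dots> = (\<Sum>w\<in>V. hat_m M (Inr (v, i)) (Inl w)) + (\<Sum>w\<in>V. \<Sum>j<M w w. hat_m M (Inr (v, i)) (Inr (w, j)))"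
    by (rule hat_sum[OF assms(1)])
  also have "(\<Sum>w\<in>V. hat_m M (Inr (v, i)) (Inl w)) = (\<Sum>w\<in>V. if w = v then 2 else 0)"
    using assms by (intro sum.cong) auto
  finally show ?thesis using assms by simp
qed


lemma virt_off: "v \<noteq> w \<Longrightarrow> virt_m V m \<omega> v w = m v w"
  by (simp add: virt_m_def)

lemma virt_diag: "v \<in> V \<Longrightarrow> virt_m V m \<omega> v v = m v v + \<omega> v"
  by (simp add: virt_m_def)

lemma val_virt:
  assumes "v \<in> V"
  shows "valency V (virt_m V m \<omega>) v = (\<Sum>w\<in>V-{v}. m v w) + 2 * (m v v + \<omega> v)"
proof -
  have "(\<Sum>w\<in>V-{v}. virt_m V m \<omega> v w) = (\<Sum>w\<in>V-{v}. m v w)"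
    by (rule sum.cong) (auto simp: virt_off)
  then show ?thesis using assms by (simp add: valency_def virt_diag)
qed

lemma hat_lg:
  assumes "multigraph V m"
  shows "lg (hat_V V (virt_m V m \<omega>)) (hat_m (virt_m V m \<omega>))"
  by unfold_locales (rule hat_multigraph[OF virt_multigraph[OF assms]], rule hat_noloop)

lemma canon_eq:
  assumes mg: "multigraph V m"
  shows "lg.KK (hat_V V (virt_m V m \<omega>)) (hat_m (virt_m V m \<omega>)) x = ext_div (wcanon V m \<omega>) x"
proof -
  interpret h: lg "hat_V V (virt_m V m \<omega>)" "hat_m (virt_m V m \<omega>)" by (rule hat_lg[OF mg])
  have fin: "finite V" using mg by (simp add: multigraph_def)
  show ?thesis
  proof (cases x)
    case (Inl v)
    show ?thesis
    proof (cases "v \<in> V")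
      case True
      then have "Inl v \<in> hat_V V (virt_m V m \<omega>)" by (simp add: hat_V_def)
      then show ?thesis using Inl True hat_val_Inl[OF fin True]
        by (simp add: h.KK_def wcanon_def)
    next
      case False
      then have "Inl v \<notin> hat_V V (virt_m V m \<omega>)" by (auto simp: hat_V_def)
      then show ?thesis using Inl False by (simp add: h.KK_def wcanon_def)
    qed
  next
    case (Inr p)
    obtain v i where p: "p = (v, i)" by (cases p)
    show ?thesis
    proof (cases "v \<in> V \<and> i < virt_m V m \<omega> v v")
      case True
      then have "Inr (v, i) \<in> hat_V V (virt_m V m \<omega>)" by (simp add: hat_V_def)
      then show ?thesis using Inr p True hat_val_Inr[OF fin, of v i "virt_m V m \<omega>"]
        by (simp add: h.KK_def)
    next
      case False
      then have "Inr (v, i) \<notin> hat_V V (virt_m V m \<omega>)" by (auto simp: hat_V_def)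
      then show ?thesis using Inr p by (simp add: h.KK_def)
    qed
  qed
qed

lemma deg_ext: "finite V \<Longrightarrow> deg (hat_V V M) (ext_div D) = deg V D"
  unfolding deg_def by (simp add: hat_sum)

lemma div_ext: "is_div V D \<Longrightarrow> is_div (hat_V V M) (ext_div D)"
  unfolding is_div_def ext_div_def by (auto simp: hat_V_def split: sum.splits)

lemma deg_wcanon:
  assumes mg: "multigraph V m"
  shows "deg V (wcanon V m \<omega>) = 2 * wgenus V m \<omega> - 2"
proof -
  have fin: "finite V" and sym: "\<And>v w. m v w = m w v" using mg by (auto simp: multigraph_def)
  obtain \<pi> :: "'a \<Rightarrow> int" where inj: "inj_on \<pi> V" using exists_inj_int[OF fin] by blast
  define Y where "Y = (\<Sum>v\<in>V. \<Sum>w\<in>{w\<in>V. \<pi> w < \<pi> v}. int (m v w))"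
  have X: "(\<Sum>v\<in>V. \<Sum>w\<in>V-{v}. int (m v w)) = 2 * Y"
    unfolding Y_def by (rule sum_split_sym[OF fin _ inj]) (simp add: sym)
  have "int ((\<Sum>v\<in>V. \<Sum>w\<in>V-{v}. m v w) div 2) = int (\<Sum>v\<in>V. \<Sum>w\<in>V-{v}. m v w) div 2"
    by (simp add: zdiv_int)
  also have "int (\<Sum>v\<in>V. \<Sum>w\<in>V-{v}. m v w) = 2 * Y" using X by simp
  finally have half: "int ((\<Sum>v\<in>V. \<Sum>w\<in>V-{v}. m v w) div 2) = Y" by simp
  have "deg V (wcanon V m \<omega>) = (\<Sum>v\<in>V. (\<Sum>w\<in>V-{v}. int (m v w)) + 2 * int (m v v) + 2 * int (\<omega> v) - 2)"
    unfolding deg_def wcanon_def by (rule sum.cong) (auto simp: val_virt)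
  also have "\<dots> = 2 * Y + 2 * (\<Sum>v\<in>V. int (m v v)) + 2 * (\<Sum>v\<in>V. int (\<omega> v)) - 2 * int (card V)"
    using X by (simp add: sum.distrib sum_subtractf sum_distrib_left)
  also have "\<dots> = 2 * wgenus V m \<omega> - 2"
    using half by (simp add: wgenus_def betti1_def num_edges_def)
  finally show ?thesis .
qed


lemma lin_equiv_hat:
  assumes mg: "multigraph V m" and le: "lin_equiv V m D D'"
  shows "lin_equiv (hat_V V (virt_m V m \<omega>)) (hat_m (virt_m V m \<omega>)) (ext_div D) (ext_div D')"
proof -
  define M where "M = virt_m V m \<omega>"
  define H where "H = hat_V V M"
  have fin: "finite V" using mg by (simp add: multigraph_def)
  obtain c where c: "(\<lambda>x. D x - D' x) = (\<lambda>w. \<Sum>v\<in>V. c v * T_div V m v w)"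
    using le by (auto simp: lin_equiv_def principal_def)
  have cu: "D u - D' u = (\<Sum>v\<in>V. c v * T_div V m v u)" for u using fun_cong[OF c, of u] by simp
  define c' :: "'a + 'a \<times> nat \<Rightarrow> int" where "c' = (\<lambda>x. case x of Inl v \<Rightarrow> c v | Inr p \<Rightarrow> c (fst p))"
  have key: "ext_div D y - ext_div D' y = (\<Sum>x\<in>H. c' x * T_div H (hat_m M) x y)" for y
  proof (cases "y \<in> H")
    case False
    have "(\<Sum>x\<in>H. c' x * T_div H (hat_m M) x y) = 0" using False by (simp add: T_div_def)
    moreover have "ext_div D y - ext_div D' y = 0"
    proof (cases y)
      case (Inl u)
      then have "u \<notin> V" using False by (auto simp: H_def hat_V_def)
      then show ?thesis using Inl cu[of u] by (simp add: T_div_def)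
    qed simp
    ultimately show ?thesis by simp
  next
    case True
    have RHS: "(\<Sum>x\<in>H. c' x * T_div H (hat_m M) x y) =
       (\<Sum>v\<in>V. c v * inters H (hat_m M) (Inl v) y) + (\<Sum>v\<in>V. \<Sum>i<M v v. c v * inters H (hat_m M) (Inr (v, i)) y)"
      unfolding H_def using True by (simp add: hat_sum[OF fin] T_div_def c'_def H_def)
    show ?thesis
    proof (cases y)
      case (Inl u)
      then have uV: "u \<in> V" using True by (auto simp: H_def hat_V_def)
      have A: "(\<Sum>i<M v v. c v * inters H (hat_m M) (Inr (v, i)) (Inl u)) = (if v = u then 2 * c u * int (M u u) else 0)" for v
        by (cases "v = u") (simp_all add: inters_def)
      have B: "c v * inters H (hat_m M) (Inl v) (Inl u) + (if v = u then 2 * c u * int (M u u) else 0)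
               = c v * T_div V m v u" if "v \<in> V" for v
      proof (cases "v = u")
        case True
        have "valency H (hat_m M) (Inl u) = valency V M u" unfolding H_def by (rule hat_val_Inl[OF fin uV])
        moreover have "valency V M u = (\<Sum>w\<in>V-{u}. m u w) + 2 * (m u u + \<omega> u)" unfolding M_def by (rule val_virt[OF uV])
        moreover have "M u u = m u u + \<omega> u" unfolding M_def by (rule virt_diag[OF uV])
        ultimately show ?thesis using True uV
          by (simp add: inters_def T_div_def valency_def algebra_simps)
      next
        case False
        then show ?thesis using uV by (simp add: inters_def T_div_def M_def virt_off)
      qed
      have "(\<Sum>x\<in>H. c' x * T_div H (hat_m M) x y) = (\<Sum>v\<in>V. c v * inters H (hat_m M) (Inl v) (Inl u) + (if v = u then 2 * c u * int (M u u) else 0))"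
        unfolding RHS[unfolded Inl] Inl A using uV fin by (simp add: sum.distrib)
      also have "\<dots> = (\<Sum>v\<in>V. c v * T_div V m v u)" by (rule sum.cong) (simp_all add: B)
      finally show ?thesis using Inl cu[of u] by simp
    next
      case (Inr p)
      obtain u j where p: "p = (u, j)" by (cases p)
      have uj: "u \<in> V" "j < M u u" using True Inr p by (auto simp: H_def hat_V_def)
      have val2: "valency H (hat_m M) (Inr (u, j)) = 2" unfolding H_def by (rule hat_val_Inr[where M=M, OF fin uj])
      have A: "(\<Sum>v\<in>V. c v * inters H (hat_m M) (Inl v) (Inr (u, j))) = (\<Sum>v\<in>V. if v = u then 2 * c u else 0)"
        by (rule sum.cong) (use uj in \<open>auto simp: inters_def\<close>)
      have B: "(\<Sum>i<M v v. c v * inters H (hat_m M) (Inr (v, i)) (Inr (u, j))) = (if v = u then - 2 * c u else 0)" for v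
      proof (cases "v = u")
        case True
        have "(\<Sum>i<M v v. c v * inters H (hat_m M) (Inr (v, i)) (Inr (u, j))) = (\<Sum>i<M u u. if i = j then - 2 * c u else 0)"
          by (rule sum.cong) (use True val2 in \<open>auto simp: inters_def\<close>)
        also have "\<dots> = - 2 * c u" using uj by simp
        finally show ?thesis using True by simp
      next
        case False then show ?thesis by (simp add: inters_def)
      qed
      have "(\<Sum>x\<in>H. c' x * T_div H (hat_m M) x y) = 0"
        unfolding RHS[unfolded Inr p] Inr p A B using uj fin by simp
      then show ?thesis using Inr by simp
    qed
  qed
  show ?thesis unfolding lin_equiv_def principal_def M_def[symmetric] H_def[symmetric]
    by (rule exI[of _ c']) (simp add: key fun_eq_iff)
qed


theorem theorem3p8:
  fixes V :: "'a set" and m :: "'a \<Rightarrow> 'a \<Rightarrow> nat" and \<omega> :: "'a \<Rightarrow> nat"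
  assumes "multigraph V m"
  shows "(\<forall>D. is_div V D \<longrightarrow>
            wrank V m \<omega> D - wrank V m \<omega> (\<lambda>v. wcanon V m \<omega> v - D v)
              = deg V D - wgenus V m \<omega> + 1)
       \<and> (\<forall>D D'. is_div V D \<and> is_div V D' \<and> lin_equiv V m D D' \<longrightarrow>
            wrank V m \<omega> D = wrank V m \<omega> D')"
proof -
  note mg = assms
  define M where "M = virt_m V m \<omega>"
  define H where "H = hat_V V M"
  have fin: "finite V" using mg by (simp add: multigraph_def)
  interpret h: lg H "hat_m M" unfolding H_def M_def by (rule hat_lg[OF mg])
  have wr: "wrank V m \<omega> D = rank H (hat_m M) (ext_div D)" for D
    by (simp add: wrank_def rank_sharp_def H_def M_def)
  have KK: "h.KK = ext_div (wcanon V m \<omega>)"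
    using canon_eq[OF mg, of \<omega>] unfolding H_def M_def by (simp add: fun_eq_iff)
  obtain \<pi>0 :: "('a + 'a \<times> nat) \<Rightarrow> int" where inj: "inj_on \<pi>0 H" using exists_inj_int[OF h.finW] by blast
  have "2 * deg H (h.nu \<pi>0) = deg H h.KK" by (rule h.deg_nu[OF inj])
  also have "\<dots> = deg V (wcanon V m \<omega>)" unfolding KK unfolding H_def by (rule deg_ext[OF fin])
  also have "\<dots> = 2 * wgenus V m \<omega> - 2" by (rule deg_wcanon[OF mg])
  finally have degnu: "deg H (h.nu \<pi>0) = wgenus V m \<omega> - 1" by simp
  have P1: "wrank V m \<omega> D - wrank V m \<omega> (\<lambda>v. wcanon V m \<omega> v - D v) = deg V D - wgenus V m \<omega> + 1"
    if D: "is_div V D" for D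
  proof -
    have Dh: "is_div H (ext_div D)" unfolding H_def by (rule div_ext[OF D])
    have e: "(\<lambda>x. h.KK x - ext_div D x) = ext_div (\<lambda>v. wcanon V m \<omega> v - D v)"
      unfolding KK by (simp add: fun_eq_iff ext_div_def split: sum.splits)
    have "rank H (hat_m M) (ext_div D) - rank H (hat_m M) (\<lambda>x. h.KK x - ext_div D x) = deg H (ext_div D) - deg H (h.nu \<pi>0)"
      by (rule h.RR[OF Dh inj])
    then show ?thesis unfolding e wr[symmetric] using degnu deg_ext[OF fin, of M D] by (simp add: H_def)
  qed
  have P2: "wrank V m \<omega> D = wrank V m \<omega> D'" if "lin_equiv V m D D'" for D D'
    unfolding wr by (rule h.rank_inv) (use lin_equiv_hat[OF mg that, of \<omega>] in \<open>simp add: H_def M_def\<close>)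
  show ?thesis using P1 P2 by blast
qed


end
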